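(* Let $A,B,l$ be positive integers and let $\mathcal A\subset\mathbb R^2$ be a set such that $a+b=l-1$ for all $(a,b)\in\mathcal A$. Then there exist $\lambda_1,\lambda_2\in\mathbb R$ with \[a\lambda_1+b\lambda_2\ge1\ \text{ for all }(a,b)\in\mathcal A\qquad\text{and}\qquad \lambda_1A+\lambda_2B<0\] if and only if either \[\inf_{(a,b)\in\mathcal A}a>\frac{A(l-1)}{A+B}\qquad\text{or}\qquad\inf_{(a,b)\in\mathcal A}b>\frac{B(l-1)}{A+B}.\] *)

theory Defs
  imports Complex_Main "HOL-Library.Extended_Real"
begin

end

theory Submission
  imports Defs
begin

lemma inf_gt_iff:
  "(INF p\<in>S. ereal (f p)) > ereal c \<longleftrightarrow> (\<exists>m>c. \<forall>p\<in>S. f p \<ge> m)"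
proof
  assume h: "(INF p\<in>S. ereal (f p)) > ereal c"
  then obtain z where z: "ereal c < ereal z" "ereal z < (INF p\<in>S. ereal (f p))"
    using ereal_dense2 by blast
  have "\<forall>p\<in>S. f p \<ge> z"
  proof
    fix p assume "p \<in> S"
    then have "(INF p\<in>S. ereal (f p)) \<le> ereal (f p)" by (rule INF_lower)
    with z(2) have "ereal z \<le> ereal (f p)" by (meson less_le_trans less_imp_le)
    then show "f p \<ge> z" by simp
  qed
  with z(1) show "\<exists>m>c. \<forall>p\<in>S. f p \<ge> m" by auto
next
  assume "\<exists>m>c. \<forall>p\<in>S. f p \<ge> m"
  then obtain m where m: "m > c" "\<forall>p\<in>S. f p \<ge> m" by blast
  have "ereal m \<le> (INF p\<in>S. ereal (f p))"
    by (rule INF_greatest) (use m in auto)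
  moreover have "ereal c < ereal m" using m(1) by simp
  ultimately show "(INF p\<in>S. ereal (f p)) > ereal c"
    using less_le_trans by blast
qed

lemma fwd:
  fixes A B L d lam2 :: real and S :: "(real \<times> real) set"
  assumes A: "A > 0" and B: "B > 0" and L: "L \<ge> 0"
    and S: "\<forall>(a, b) \<in> S. a + b = L"
    and h1: "\<forall>(a, b) \<in> S. a * (lam2 + d) + b * lam2 \<ge> 1"
    and h2: "(lam2 + d) * A + lam2 * B < 0"
    and d: "d > 0"
  shows "\<forall>p\<in>S. fst p \<ge> A * L / (A + B) + 1 / d"
proof
  fix p assume p: "p \<in> S"
  obtain a b where ab: "p = (a, b)" by (cases p)
  have e1: "a + b = L" using S p ab by auto
  have e2: "a * (lam2 + d) + b * lam2 \<ge> 1" using h1 p ab by auto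
  have e1': "b = L - a" using e1 by simp
  have e3: "a * d + L * lam2 \<ge> 1" using e2 unfolding e1' by (simp add: algebra_simps)
  have s: "A + B > 0" using A B by simp
  have l2: "lam2 \<le> - (d * A) / (A + B)"
    using h2 s by (simp add: field_simps)
  have "L * lam2 \<le> L * (- (d * A) / (A + B))"
    using mult_left_mono[OF l2 L] .
  with e3 have "a * d \<ge> 1 + d * (A * L / (A + B))" by (simp add: field_simps)
  then have "a \<ge> (1 + d * (A * L / (A + B))) / d" using d by (simp add: field_simps)
  moreover have "(1 + d * (A * L / (A + B))) / d = A * L / (A + B) + 1 / d"
    using d by (simp add: field_simps)
  ultimately show "fst p \<ge> A * L / (A + B) + 1 / d" using ab by simp
qed

lemma bwd:
  fixes A B L m :: real and S :: "(real \<times> real) set"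
  assumes A: "A > 0" and B: "B > 0" and L: "L \<ge> 0"
    and S: "\<forall>(a, b) \<in> S. a + b = L"
    and m: "m > A * L / (A + B)" and hm: "\<forall>p\<in>S. fst p \<ge> m"
  shows "\<exists>lam1 lam2 :: real. (\<forall>(a, b) \<in> S. a * lam1 + b * lam2 \<ge> 1)
            \<and> lam1 * A + lam2 * B < 0"
proof -
  define c where "c = A * L / (A + B)"
  define d where "d = (1 + L) / (m - c)"
  have s: "A + B > 0" using A B by simp
  have dp: "d > 0" using m L unfolding d_def c_def by simp
  have dmc: "d * (m - c) = 1 + L" using m unfolding d_def c_def by simp
  define lam2 where "lam2 = - (d * A) / (A + B) - 1"
  define lam1 where "lam1 = lam2 + d"
  have "\<forall>(a, b) \<in> S. a * lam1 + b * lam2 \<ge> 1"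
  proof (intro ballI, clarify)
    fix a b assume p: "(a, b) \<in> S"
    have e1: "b = L - a" using S p by auto
    have am: "a \<ge> m" using hm p by auto
    have "a * lam1 + b * lam2 = a * d + L * lam2" unfolding lam1_def e1
      by (simp add: algebra_simps)
    also have "\<dots> = d * (a - c) - L" unfolding lam2_def c_def using s
      by (simp add: field_simps)
    also have "\<dots> \<ge> d * (m - c) - L" using am dp by simp
    finally show "a * lam1 + b * lam2 \<ge> 1" using dmc by simp
  qed
  moreover have "lam1 * A + lam2 * B < 0"
  proof -
    have "lam1 * A + lam2 * B = d * A + lam2 * (A + B)" unfolding lam1_def
      by (simp add: algebra_simps)
    also have "\<dots> = - (A + B)" unfolding lam2_def using s by (simp add: field_simps)
    finally show ?thesis using s by simp
  qed
  ultimately show ?thesis by blast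
qed

theorem lemma4p9:
  fixes A B l :: nat and S :: "(real \<times> real) set"
  assumes "A > 0" and "B > 0" and "l > 0"
    and "\<forall>(a, b) \<in> S. a + b = real l - 1"
  shows "(\<exists>lam1 lam2 :: real. (\<forall>(a, b) \<in> S. a * lam1 + b * lam2 \<ge> 1)
            \<and> lam1 * real A + lam2 * real B < 0)
     \<longleftrightarrow> ((INF p\<in>S. ereal (fst p)) > ereal (real A * (real l - 1) / (real A + real B))
          \<or> (INF p\<in>S. ereal (snd p)) > ereal (real B * (real l - 1) / (real A + real B)))"
proof -
  define L where "L = real l - 1"
  have L: "L \<ge> 0" using assms(3) unfolding L_def by simp
  have Ap: "real A > 0" and Bp: "real B > 0" using assms by auto
  have S: "\<forall>(a, b) \<in> S. a + b = L" using assms(4) unfolding L_def .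
  define T where "T = prod.swap ` S"
  have T: "\<forall>(a, b) \<in> T. a + b = L" using S unfolding T_def by auto
  have snd_eq: "(INF p\<in>S. ereal (snd p)) = (INF p\<in>T. ereal (fst p))"
    unfolding T_def by (simp add: image_comp comp_def)
  have LHS: "(\<exists>lam1 lam2 :: real. (\<forall>(a, b) \<in> S. a * lam1 + b * lam2 \<ge> 1)
            \<and> lam1 * real A + lam2 * real B < 0)
     \<longleftrightarrow> ((\<exists>m>real A * L / (real A + real B). \<forall>p\<in>S. fst p \<ge> m)
          \<or> (\<exists>m>real B * L / (real A + real B). \<forall>p\<in>T. fst p \<ge> m))"
  proof
    assume "\<exists>lam1 lam2 :: real. (\<forall>(a, b) \<in> S. a * lam1 + b * lam2 \<ge> 1)
            \<and> lam1 * real A + lam2 * real B < 0"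
    then obtain lam1 lam2 :: real where h1: "\<forall>(a, b) \<in> S. a * lam1 + b * lam2 \<ge> 1"
      and h2: "lam1 * real A + lam2 * real B < 0" by blast
    define d where "d = lam1 - lam2"
    have l1: "lam1 = lam2 + d" unfolding d_def by simp
    consider "d > 0" | "d < 0" | "d = 0" by linarith
    then show "(\<exists>m>real A * L / (real A + real B). \<forall>p\<in>S. fst p \<ge> m)
          \<or> (\<exists>m>real B * L / (real A + real B). \<forall>p\<in>T. fst p \<ge> m)"
    proof cases
      case 1
      have "\<forall>p\<in>S. fst p \<ge> real A * L / (real A + real B) + 1 / d"
        using fwd[OF Ap Bp L S _ _ 1, of lam2] h1 h2 unfolding l1 by blast
      then show ?thesis using 1 by (intro disjI1 exI[of _ "real A * L / (real A + real B) + 1 / d"]) auto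
    next
      case 2
      have d2: "- d > 0" using 2 by simp
      have ld: "lam1 + - d = lam2" unfolding d_def by simp
      have t1: "\<forall>(a, b) \<in> T. a * (lam1 + - d) + b * lam1 \<ge> 1"
        unfolding ld T_def using h1 by (auto simp: add.commute)
      have t2: "(lam1 + - d) * real B + lam1 * real A < 0"
        unfolding ld using h2 by linarith
      have "\<forall>p\<in>T. fst p \<ge> real B * L / (real A + real B) + 1 / (- d)"
        using fwd[OF Bp Ap L T t1 t2 d2] by (simp add: add.commute)
      then show ?thesis using d2 by (intro disjI2 exI[of _ "real B * L / (real A + real B) + 1 / (- d)"]) auto
    next
      case 3
      have "S = {}"
      proof (rule ccontr)
        assume "S \<noteq> {}"
        then obtain a b where p: "(a, b) \<in> S" by auto
        have "a + b = L" using S p by auto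
        moreover have "a * lam1 + b * lam2 \<ge> 1" using h1 p by auto
        moreover have "lam1 = lam2" using 3 unfolding d_def by simp
        ultimately have "L * lam2 \<ge> 1" by (simp add: distrib_right[symmetric])
        moreover have "lam2 < 0" using h2 3 Ap Bp unfolding d_def
        proof -
          have "lam2 * (real A + real B) < 0" using h2 3 unfolding d_def
            by (simp add: distrib_left)
          then show ?thesis using Ap Bp by (simp add: mult_less_0_iff)
        qed
        ultimately show False using L mult_nonneg_nonpos[of L lam2] by linarith
      qed
      then show ?thesis by (intro disjI1 exI[of _ "real A * L / (real A + real B) + 1"]) auto
    qed
  next
    assume "(\<exists>m>real A * L / (real A + real B). \<forall>p\<in>S. fst p \<ge> m)
          \<or> (\<exists>m>real B * L / (real A + real B). \<forall>p\<in>T. fst p \<ge> m)"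
    then show "\<exists>lam1 lam2 :: real. (\<forall>(a, b) \<in> S. a * lam1 + b * lam2 \<ge> 1)
            \<and> lam1 * real A + lam2 * real B < 0"
    proof
      assume "\<exists>m>real A * L / (real A + real B). \<forall>p\<in>S. fst p \<ge> m"
      then obtain m where "m > real A * L / (real A + real B)" "\<forall>p\<in>S. fst p \<ge> m" by blast
      from bwd[OF Ap Bp L S this] show ?thesis .
    next
      assume "\<exists>m>real B * L / (real A + real B). \<forall>p\<in>T. fst p \<ge> m"
      then obtain m where "m > real B * L / (real A + real B)" "\<forall>p\<in>T. fst p \<ge> m" by blast
      then have "m > real B * L / (real B + real A)" "\<forall>p\<in>T. fst p \<ge> m" by (simp_all add: add.commute)
      from bwd[OF Bp Ap L T this] obtain lam1 lam2 where
        "\<forall>(a, b) \<in> T. a * lam1 + b * lam2 \<ge> 1" "lam1 * real B + lam2 * real A < 0" by blast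
      then show ?thesis unfolding T_def
        by (intro exI[of _ lam2] exI[of _ lam1]) (auto simp: add.commute)
    qed
  qed
  show ?thesis
    unfolding L_def[symmetric] snd_eq inf_gt_iff LHS by (rule refl)
qed

end
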